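(* Let $H$ be a group, $K\lneq H$, $\phi\in\operatorname{Aut}(H)$, $G=\langle H,t;\ tkt^{-1}=\phi(k),\ k\in K\rangle$. For every $g\in G$ there exist $i\in\mathbb{Z}$ and $a\in H$ such that for all $b,c\in H$ with $g^{-1}bg=c$ we have $c=a^{-1}\phi^{i}(b)a$. *)

theory Defs
  imports "HOL-Algebra.Algebra"
begin

text \<open>HNN extension G = < H, t ; t k t^-1 = phi(k), k in K >, built as the
  group presented by generators carrier H plus t, relations: the
  multiplication table of H, and t k t^-1 = phi k for k in K.
  Letters: (Inl h, False) = h, (Inl h, True) = h^-1, (Inr (), False) = t,
  (Inr (), True) = t^-1.\<close>

type_synonym 'a hnn_letter = "('a + unit) \<times> bool"

definition hnn_letters :: "('a, 'b) monoid_scheme \<Rightarrow> 'a hnn_letter set" where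
  "hnn_letters H = {(Inl h, e) | h e. h \<in> carrier H} \<union> {(Inr (), e) | e. True}"

definition hnn_words :: "('a, 'b) monoid_scheme \<Rightarrow> 'a hnn_letter list set" where
  "hnn_words H = {w. set w \<subseteq> hnn_letters H}"

definition letter_inv :: "'a hnn_letter \<Rightarrow> 'a hnn_letter" where
  "letter_inv x = (fst x, \<not> snd x)"

inductive hnn_eq :: "('a, 'b) monoid_scheme \<Rightarrow> 'a set \<Rightarrow> ('a \<Rightarrow> 'a)
    \<Rightarrow> 'a hnn_letter list \<Rightarrow> 'a hnn_letter list \<Rightarrow> bool"
  for H K phi where
  hnn_refl: "hnn_eq H K phi w w"
| hnn_sym: "hnn_eq H K phi w w' \<Longrightarrow> hnn_eq H K phi w' w"
| hnn_trans: "hnn_eq H K phi u w \<Longrightarrow> hnn_eq H K phi w v \<Longrightarrow> hnn_eq H K phi u v"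
| hnn_cancel: "u \<in> hnn_words H \<Longrightarrow> v \<in> hnn_words H \<Longrightarrow> x \<in> hnn_letters H \<Longrightarrow>
    hnn_eq H K phi (u @ [x, letter_inv x] @ v) (u @ v)"
| hnn_mult: "u \<in> hnn_words H \<Longrightarrow> v \<in> hnn_words H \<Longrightarrow> h1 \<in> carrier H \<Longrightarrow> h2 \<in> carrier H \<Longrightarrow>
    hnn_eq H K phi (u @ [(Inl h1, False), (Inl h2, False)] @ v) (u @ [(Inl (h1 \<otimes>\<^bsub>H\<^esub> h2), False)] @ v)"
| hnn_one: "u \<in> hnn_words H \<Longrightarrow> v \<in> hnn_words H \<Longrightarrow>
    hnn_eq H K phi (u @ [(Inl \<one>\<^bsub>H\<^esub>, False)] @ v) (u @ v)"
| hnn_conj: "u \<in> hnn_words H \<Longrightarrow> v \<in> hnn_words H \<Longrightarrow> k \<in> K \<Longrightarrow>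
    hnn_eq H K phi (u @ [(Inr (), False), (Inl k, False), (Inr (), True)] @ v)
                   (u @ [(Inl (phi k), False)] @ v)"

definition hnn_class :: "('a, 'b) monoid_scheme \<Rightarrow> 'a set \<Rightarrow> ('a \<Rightarrow> 'a)
    \<Rightarrow> 'a hnn_letter list \<Rightarrow> 'a hnn_letter list set" where
  "hnn_class H K phi w = {w'. w' \<in> hnn_words H \<and> hnn_eq H K phi w w'}"

definition hnn_group :: "('a, 'b) monoid_scheme \<Rightarrow> 'a set \<Rightarrow> ('a \<Rightarrow> 'a)
    \<Rightarrow> 'a hnn_letter list set monoid" where
  "hnn_group H K phi =
    \<lparr> carrier = hnn_class H K phi ` hnn_words H,
      monoid.mult = (\<lambda>A B. hnn_class H K phi ((SOME w. w \<in> A) @ (SOME w. w \<in> B))),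
      monoid.one = hnn_class H K phi [] \<rparr>"

definition hnn_emb :: "('a, 'b) monoid_scheme \<Rightarrow> 'a set \<Rightarrow> ('a \<Rightarrow> 'a) \<Rightarrow> 'a
    \<Rightarrow> 'a hnn_letter list set" where
  "hnn_emb H K phi h = hnn_class H K phi [(Inl h, False)]"

definition hnn_t :: "('a, 'b) monoid_scheme \<Rightarrow> 'a set \<Rightarrow> ('a \<Rightarrow> 'a) \<Rightarrow> 'a hnn_letter list set" where
  "hnn_t H K phi = hnn_class H K phi [(Inr (), False)]"

definition aut_pow :: "('a, 'b) monoid_scheme \<Rightarrow> ('a \<Rightarrow> 'a) \<Rightarrow> int \<Rightarrow> 'a \<Rightarrow> 'a" where
  "aut_pow H phi i = (if 0 \<le> i then phi ^^ nat i else (inv_into (carrier H) phi) ^^ nat (- i))"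

end

theory Submission
  imports Defs
begin


context
  fixes H :: "('a, 'b) monoid_scheme" and phi :: "'a \<Rightarrow> 'a"
  assumes grp: "group H" and iso: "phi \<in> iso H H"
begin

private abbreviation "psi \<equiv> inv_into (carrier H) phi"

lemma bij_phi: "bij_betw phi (carrier H) (carrier H)"
  using iso by (simp add: iso_def)

lemma phi_closed: "x \<in> carrier H \<Longrightarrow> phi x \<in> carrier H"
  using bij_phi bij_betwE by blast

lemma psi_closed: "x \<in> carrier H \<Longrightarrow> psi x \<in> carrier H"
  using bij_phi by (metis bij_betw_def inv_into_into)

lemma phi_psi: "x \<in> carrier H \<Longrightarrow> phi (psi x) = x"
  using bij_phi by (metis bij_betw_def f_inv_into_f)

lemma psi_phi: "x \<in> carrier H \<Longrightarrow> psi (phi x) = x"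
  using bij_phi by (metis bij_betw_def inv_into_f_f)

lemma phi_mult: "x \<in> carrier H \<Longrightarrow> y \<in> carrier H \<Longrightarrow> phi (x \<otimes>\<^bsub>H\<^esub> y) = phi x \<otimes>\<^bsub>H\<^esub> phi y"
  using iso by (simp add: iso_def hom_mult)

lemma phi_one: "phi \<one>\<^bsub>H\<^esub> = \<one>\<^bsub>H\<^esub>"
  using iso grp by (simp add: iso_def group.is_monoid hom_one)

lemma psi_mult: "x \<in> carrier H \<Longrightarrow> y \<in> carrier H \<Longrightarrow> psi (x \<otimes>\<^bsub>H\<^esub> y) = psi x \<otimes>\<^bsub>H\<^esub> psi y"
proof -
  assume x: "x \<in> carrier H" and y: "y \<in> carrier H"
  have "x \<otimes>\<^bsub>H\<^esub> y = phi (psi x \<otimes>\<^bsub>H\<^esub> psi y)"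
    using x y by (simp add: phi_mult psi_closed phi_psi)
  then show ?thesis using x y psi_phi grp
    by (metis group.is_monoid monoid.m_closed psi_closed)
qed

lemma psi_one: "psi \<one>\<^bsub>H\<^esub> = \<one>\<^bsub>H\<^esub>"
  using psi_phi[of "\<one>\<^bsub>H\<^esub>"] phi_one grp by (simp add: group.is_monoid monoid.one_closed)

lemma phi_pow_closed: "x \<in> carrier H \<Longrightarrow> (phi ^^ n) x \<in> carrier H"
  by (induction n) (auto simp: phi_closed)

lemma psi_pow_closed: "x \<in> carrier H \<Longrightarrow> (psi ^^ n) x \<in> carrier H"
  by (induction n) (auto simp: psi_closed)

lemma ap_closed: "x \<in> carrier H \<Longrightarrow> aut_pow H phi n x \<in> carrier H"
  by (simp add: aut_pow_def phi_pow_closed psi_pow_closed)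

lemma ap_0: "aut_pow H phi 0 x = x"
  by (simp add: aut_pow_def)

lemma ap_1: "aut_pow H phi 1 x = phi x"
  by (simp add: aut_pow_def)

lemma ap_succ: "x \<in> carrier H \<Longrightarrow> aut_pow H phi (n+1) x = phi (aut_pow H phi n x)"
proof (cases "0 \<le> n")
  case True
  then have "nat (n+1) = Suc (nat n)" by simp
  then show ?thesis using True by (simp add: aut_pow_def)
next
  case False
  assume x: "x \<in> carrier H"
  define j where "j = nat (-(n+1))"
  have j: "nat (-n) = Suc j" "nat (-(n+1)) = j" using False by (auto simp: j_def)
  have "aut_pow H phi (n+1) x = (psi ^^ j) x"
    using False j by (cases "n+1 = 0") (auto simp: aut_pow_def)
  also have "\<dots> = phi (psi ((psi ^^ j) x))" using phi_psi psi_pow_closed x by simp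
  also have "\<dots> = phi (aut_pow H phi n x)" using False j by (simp add: aut_pow_def)
  finally show ?thesis .
qed

lemma ap_pred: "x \<in> carrier H \<Longrightarrow> aut_pow H phi (n-1) x = psi (aut_pow H phi n x)"
proof -
  assume x: "x \<in> carrier H"
  have "phi (aut_pow H phi (n-1) x) = aut_pow H phi n x"
    using ap_succ[OF x, of "n-1"] by simp
  then show ?thesis using psi_phi ap_closed x by metis
qed

lemma ap_add: "x \<in> carrier H \<Longrightarrow> aut_pow H phi (m+n) x = aut_pow H phi m (aut_pow H phi n x)"
proof (induction m rule: int_induct[where k=0])
  case base
  then show ?case by (simp add: ap_0)
next
  case (step1 i)
  then show ?case using ap_succ ap_closed
    by (metis add.commute add.left_commute)
next
  case (step2 i)
  then show ?case using ap_pred ap_closed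
    by (metis add.commute diff_add_eq)
qed

lemma ap_mult: "x \<in> carrier H \<Longrightarrow> y \<in> carrier H \<Longrightarrow>
   aut_pow H phi m (x \<otimes>\<^bsub>H\<^esub> y) = aut_pow H phi m x \<otimes>\<^bsub>H\<^esub> aut_pow H phi m y"
proof (induction m rule: int_induct[where k=0])
  case base
  then show ?case by (simp add: ap_0)
next
  case (step1 i)
  then show ?case by (simp add: ap_succ ap_closed phi_mult grp group.is_monoid monoid.m_closed)
next
  case (step2 i)
  then show ?case by (simp add: ap_pred ap_closed psi_mult grp group.is_monoid monoid.m_closed)
qed

lemma ap_one: "aut_pow H phi m \<one>\<^bsub>H\<^esub> = \<one>\<^bsub>H\<^esub>"
proof (induction m rule: int_induct[where k=0])
  case base
  then show ?case by (simp add: ap_0)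
next
  case (step1 i)
  then show ?case by (simp add: ap_succ phi_one grp group.is_monoid monoid.one_closed)
next
  case (step2 i)
  then show ?case by (simp add: ap_pred psi_one grp group.is_monoid monoid.one_closed)
qed

end


definition pmul :: "('a, 'b) monoid_scheme \<Rightarrow> ('a \<Rightarrow> 'a) \<Rightarrow> 'a \<times> int \<Rightarrow> 'a \<times> int \<Rightarrow> 'a \<times> int" where
  "pmul H phi p q = (fst p \<otimes>\<^bsub>H\<^esub> aut_pow H phi (snd p) (fst q), snd p + snd q)"

definition lev :: "('a, 'b) monoid_scheme \<Rightarrow> 'a hnn_letter \<Rightarrow> 'a \<times> int" where
  "lev H x = (case fst x of Inl h \<Rightarrow> (if snd x then inv\<^bsub>H\<^esub> h else h, 0)
                         | Inr _ \<Rightarrow> (\<one>\<^bsub>H\<^esub>, if snd x then -1 else 1))"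

primrec weval :: "('a, 'b) monoid_scheme \<Rightarrow> ('a \<Rightarrow> 'a) \<Rightarrow> 'a hnn_letter list \<Rightarrow> 'a \<times> int" where
  "weval H phi [] = (\<one>\<^bsub>H\<^esub>, 0)"
| "weval H phi (x # w) = pmul H phi (lev H x) (weval H phi w)"

lemma words_append[simp]: "u @ v \<in> hnn_words H \<longleftrightarrow> u \<in> hnn_words H \<and> v \<in> hnn_words H"
  by (auto simp: hnn_words_def)

lemma words_Cons[simp]: "x # v \<in> hnn_words H \<longleftrightarrow> x \<in> hnn_letters H \<and> v \<in> hnn_words H"
  by (auto simp: hnn_words_def)

lemma words_Nil[simp]: "[] \<in> hnn_words H"
  by (auto simp: hnn_words_def)

lemma letters_Inl[simp]: "(Inl h, e) \<in> hnn_letters H \<longleftrightarrow> h \<in> carrier H"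
  by (auto simp: hnn_letters_def)

lemma letters_Inr[simp]: "(Inr u, e) \<in> hnn_letters H"
  by (auto simp: hnn_letters_def)

lemma letter_inv_letters: "x \<in> hnn_letters H \<Longrightarrow> letter_inv x \<in> hnn_letters H"
  by (auto simp: hnn_letters_def letter_inv_def)

lemma letter_inv_inv[simp]: "letter_inv (letter_inv x) = x"
  by (simp add: letter_inv_def)

context
  fixes H :: "('a, 'b) monoid_scheme" and phi :: "'a \<Rightarrow> 'a"
  assumes grp: "group H" and iso: "phi \<in> iso H H"
begin

lemma lev_closed: "x \<in> hnn_letters H \<Longrightarrow> fst (lev H x) \<in> carrier H"
  using grp by (auto simp: hnn_letters_def lev_def group.is_monoid monoid.one_closed)

lemma weval_closed: "w \<in> hnn_words H \<Longrightarrow> fst (weval H phi w) \<in> carrier H"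
  by (induction w) (auto simp: pmul_def lev_closed ap_closed[OF grp iso] grp
       group.is_monoid monoid.one_closed monoid.m_closed)

lemma pmul_assoc: "fst p \<in> carrier H \<Longrightarrow> fst q \<in> carrier H \<Longrightarrow> fst r \<in> carrier H \<Longrightarrow>
  pmul H phi (pmul H phi p q) r = pmul H phi p (pmul H phi q r)"
  by (simp add: pmul_def ap_mult[OF grp iso] ap_closed[OF grp iso] ap_add[OF grp iso]
      monoid.m_assoc group.is_monoid grp monoid.m_closed add.assoc)

lemma pmul_lone: "fst p \<in> carrier H \<Longrightarrow> pmul H phi (\<one>\<^bsub>H\<^esub>, 0) p = p"
  by (simp add: pmul_def ap_0[OF grp iso] grp group.is_monoid monoid.l_one)

lemma pmul_rone: "fst p \<in> carrier H \<Longrightarrow> pmul H phi p (\<one>\<^bsub>H\<^esub>, 0) = p"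
  by (simp add: pmul_def ap_one[OF grp iso] grp group.is_monoid monoid.r_one)

lemma weval_append: "u \<in> hnn_words H \<Longrightarrow> v \<in> hnn_words H \<Longrightarrow>
   weval H phi (u @ v) = pmul H phi (weval H phi u) (weval H phi v)"
  by (induction u) (auto simp: pmul_lone weval_closed pmul_assoc lev_closed)

lemma weval_mid: "u \<in> hnn_words H \<Longrightarrow> v \<in> hnn_words H \<Longrightarrow> m \<in> hnn_words H \<Longrightarrow> m' \<in> hnn_words H \<Longrightarrow>
   weval H phi m = weval H phi m' \<Longrightarrow> weval H phi (u @ m @ v) = weval H phi (u @ m' @ v)"
  by (simp add: weval_append)

lemma hnn_eq_weval:
  assumes "hnn_eq H K phi w w'" "K \<subseteq> carrier H"
  shows "weval H phi w = weval H phi w'"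
  using assms(1)
proof (induction rule: hnn_eq.induct)
  case (hnn_cancel u v x)
  have "weval H phi [x, letter_inv x] = weval H phi []"
    using hnn_cancel(3) grp
    by (auto simp: hnn_letters_def lev_def letter_inv_def pmul_def ap_0[OF grp iso] ap_one[OF grp iso] ap_1
      ap_succ[OF grp iso] group.is_monoid monoid.one_closed monoid.r_one monoid.l_one
      group.r_inv group.l_inv phi_psi[OF grp iso] psi_one[OF grp iso] phi_one[OF grp iso] ap_pred[OF grp iso])
  moreover have "[x, letter_inv x] \<in> hnn_words H" using hnn_cancel(3) letter_inv_letters by simp
  ultimately show ?case using weval_mid[of u v "[x, letter_inv x]" "[]"] hnn_cancel(1,2) by simp
next
  case (hnn_mult u v h1 h2)
  have "weval H phi [(Inl h1, False), (Inl h2, False)] = weval H phi [(Inl (h1 \<otimes>\<^bsub>H\<^esub> h2), False)]"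
    using hnn_mult grp by (simp add: lev_def pmul_def ap_0[OF grp iso] group.is_monoid monoid.r_one monoid.m_closed)
  then show ?case using weval_mid[of u v "[(Inl h1, False), (Inl h2, False)]" "[(Inl (h1 \<otimes>\<^bsub>H\<^esub> h2), False)]"] hnn_mult grp
    by (simp add: group.is_monoid monoid.m_closed)
next
  case (hnn_one u v)
  have "weval H phi [(Inl \<one>\<^bsub>H\<^esub>, False)] = weval H phi []"
    using grp by (simp add: lev_def pmul_def ap_0[OF grp iso] group.is_monoid monoid.r_one monoid.one_closed)
  then show ?case using weval_mid[of u v "[(Inl \<one>\<^bsub>H\<^esub>, False)]" "[]"] hnn_one grp
    by (simp add: group.is_monoid monoid.one_closed)
next
  case (hnn_conj u v k)
  have k: "k \<in> carrier H" using hnn_conj assms(2) by auto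
  have "weval H phi [(Inr (), False), (Inl k, False), (Inr (), True)] = weval H phi [(Inl (phi k), False)]"
    using k grp by (simp add: lev_def pmul_def ap_0[OF grp iso] ap_1[OF grp iso] ap_one[OF grp iso] group.is_monoid monoid.r_one
       monoid.l_one phi_closed[OF grp iso])
  then show ?case using weval_mid[of u v "[(Inr (), False), (Inl k, False), (Inr (), True)]" "[(Inl (phi k), False)]"] hnn_conj k
    by (simp add: phi_closed[OF grp iso])
qed auto

end


lemma hnn_eq_app_right:
  assumes "hnn_eq H K phi u u'" "w \<in> hnn_words H"
  shows "hnn_eq H K phi (u @ w) (u' @ w)"
  using assms(1)
proof (induction rule: hnn_eq.induct)
  case (hnn_cancel u v x)
  then show ?case using hnn_eq.hnn_cancel[of u H "v @ w" x K phi] assms(2) by simp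
next
  case (hnn_mult u v h1 h2)
  then show ?case using hnn_eq.hnn_mult[of u H "v @ w" h1 h2 K phi] assms(2) by simp
next
  case (hnn_one u v)
  then show ?case using hnn_eq.hnn_one[of u H "v @ w" K phi] assms(2) by simp
next
  case (hnn_conj u v k)
  then show ?case using hnn_eq.hnn_conj[of u H "v @ w" k K phi] assms(2) by simp
qed (auto intro: hnn_eq.intros)

lemma hnn_eq_app_left:
  assumes "hnn_eq H K phi u u'" "w \<in> hnn_words H"
  shows "hnn_eq H K phi (w @ u) (w @ u')"
  using assms(1)
proof (induction rule: hnn_eq.induct)
  case (hnn_cancel u v x)
  then show ?case using hnn_eq.hnn_cancel[of "w @ u" H v x K phi] assms(2) by simp
next
  case (hnn_mult u v h1 h2)
  then show ?case using hnn_eq.hnn_mult[of "w @ u" H v h1 h2 K phi] assms(2) by simp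
next
  case (hnn_one u v)
  then show ?case using hnn_eq.hnn_one[of "w @ u" H v K phi] assms(2) by simp
next
  case (hnn_conj u v k)
  then show ?case using hnn_eq.hnn_conj[of "w @ u" H v k K phi] assms(2) by simp
qed (auto intro: hnn_eq.intros)

lemma class_eq: "hnn_eq H K phi u u' \<Longrightarrow> hnn_class H K phi u = hnn_class H K phi u'"
  unfolding hnn_class_def by (auto intro: hnn_eq.intros)

lemma in_class: "w \<in> hnn_words H \<Longrightarrow> w \<in> hnn_class H K phi w"
  unfolding hnn_class_def by (auto intro: hnn_eq.intros)

lemma some_class:
  assumes "w \<in> hnn_words H"
  shows "(SOME x. x \<in> hnn_class H K phi w) \<in> hnn_words H \<and> hnn_eq H K phi w (SOME x. x \<in> hnn_class H K phi w)"
proof -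
  have "(SOME x. x \<in> hnn_class H K phi w) \<in> hnn_class H K phi w"
    using in_class[OF assms] by (rule someI)
  then show ?thesis by (simp add: hnn_class_def)
qed

lemma mult_class:
  assumes "a \<in> hnn_words H" "b \<in> hnn_words H"
  shows "hnn_class H K phi a \<otimes>\<^bsub>hnn_group H K phi\<^esub> hnn_class H K phi b = hnn_class H K phi (a @ b)"
proof -
  let ?sa = "SOME x. x \<in> hnn_class H K phi a" and ?sb = "SOME x. x \<in> hnn_class H K phi b"
  have sa: "?sa \<in> hnn_words H" "hnn_eq H K phi a ?sa" using some_class[OF assms(1)] by auto
  have sb: "?sb \<in> hnn_words H" "hnn_eq H K phi b ?sb" using some_class[OF assms(2)] by auto
  have "hnn_eq H K phi (a @ b) (?sa @ b)" using hnn_eq_app_right sa assms by blast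
  moreover have "hnn_eq H K phi (?sa @ b) (?sa @ ?sb)" using hnn_eq_app_left sb sa by blast
  ultimately have "hnn_eq H K phi (a @ b) (?sa @ ?sb)" by (rule hnn_trans)
  then show ?thesis by (simp add: hnn_group_def class_eq)
qed

definition winv :: "'a hnn_letter list \<Rightarrow> 'a hnn_letter list" where
  "winv w = rev (map letter_inv w)"

lemma winv_words: "w \<in> hnn_words H \<Longrightarrow> winv w \<in> hnn_words H"
  by (auto simp: winv_def hnn_words_def letter_inv_letters)

lemma winv_eq: "w \<in> hnn_words H \<Longrightarrow> hnn_eq H K phi (winv w @ w) []"
proof (induction w)
  case Nil
  then show ?case by (simp add: winv_def hnn_refl)
next
  case (Cons x w)
  have x: "x \<in> hnn_letters H" and w: "w \<in> hnn_words H" using Cons.prems by auto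
  have wi: "winv w \<in> hnn_words H" using winv_words[OF w] .
  have "winv (x # w) @ x # w = winv w @ [letter_inv x, letter_inv (letter_inv x)] @ w"
    by (simp add: winv_def)
  moreover have "hnn_eq H K phi (winv w @ [letter_inv x, letter_inv (letter_inv x)] @ w) (winv w @ w)"
    by (rule hnn_cancel) (use wi w letter_inv_letters[OF x] in auto)
  ultimately show ?case using Cons.IH[OF w] hnn_trans by metis
qed

lemma hnn_group_group: "group (hnn_group H K phi)"
proof (rule groupI)
  fix x y assume "x \<in> carrier (hnn_group H K phi)" "y \<in> carrier (hnn_group H K phi)"
  then obtain a b where "a \<in> hnn_words H" "b \<in> hnn_words H"
    "x = hnn_class H K phi a" "y = hnn_class H K phi b"
    by (auto simp: hnn_group_def)
  then show "x \<otimes>\<^bsub>hnn_group H K phi\<^esub> y \<in> carrier (hnn_group H K phi)"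
    by (simp add: mult_class) (simp add: hnn_group_def)
next
  show "\<one>\<^bsub>hnn_group H K phi\<^esub> \<in> carrier (hnn_group H K phi)"
    by (auto simp: hnn_group_def)
next
  fix x y z assume "x \<in> carrier (hnn_group H K phi)" "y \<in> carrier (hnn_group H K phi)"
     "z \<in> carrier (hnn_group H K phi)"
  then obtain a b c where "a \<in> hnn_words H" "b \<in> hnn_words H" "c \<in> hnn_words H"
    "x = hnn_class H K phi a" "y = hnn_class H K phi b" "z = hnn_class H K phi c"
    by (auto simp: hnn_group_def)
  then show "x \<otimes>\<^bsub>hnn_group H K phi\<^esub> y \<otimes>\<^bsub>hnn_group H K phi\<^esub> z =
         x \<otimes>\<^bsub>hnn_group H K phi\<^esub> (y \<otimes>\<^bsub>hnn_group H K phi\<^esub> z)"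
    by (simp add: mult_class)
next
  fix x assume "x \<in> carrier (hnn_group H K phi)"
  then obtain a where a: "a \<in> hnn_words H" "x = hnn_class H K phi a"
    by (auto simp: hnn_group_def)
  have "\<one>\<^bsub>hnn_group H K phi\<^esub> = hnn_class H K phi []" by (simp add: hnn_group_def)
  then show "\<one>\<^bsub>hnn_group H K phi\<^esub> \<otimes>\<^bsub>hnn_group H K phi\<^esub> x = x"
    using a mult_class[of "[]" H a K phi] by simp
  show "\<exists>y\<in>carrier (hnn_group H K phi). y \<otimes>\<^bsub>hnn_group H K phi\<^esub> x = \<one>\<^bsub>hnn_group H K phi\<^esub>"
  proof
    show "hnn_class H K phi (winv a) \<in> carrier (hnn_group H K phi)"
      using winv_words[OF a(1)] by (simp add: hnn_group_def)
    show "hnn_class H K phi (winv a) \<otimes>\<^bsub>hnn_group H K phi\<^esub> x = \<one>\<^bsub>hnn_group H K phi\<^esub>"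
      using a mult_class[OF winv_words[OF a(1)] a(1), of K phi] class_eq[OF winv_eq[OF a(1), of K phi]]
      by (simp add: hnn_group_def)
  qed
qed



lemma weval_single: "group H \<Longrightarrow> phi \<in> iso H H \<Longrightarrow> b \<in> carrier H \<Longrightarrow> weval H phi [(Inl b, False)] = (b, 0)"
  by (simp add: lev_def pmul_rone)

lemma one_G: "\<one>\<^bsub>hnn_group H K phi\<^esub> = hnn_class H K phi []"
  by (simp add: hnn_group_def)

theorem lemma3p2:
  fixes H :: "('a, 'b) monoid_scheme" and K :: "'a set" and phi :: "'a \<Rightarrow> 'a"
  assumes "group H"
    and "subgroup K H" and "K \<noteq> carrier H"
    and "phi \<in> iso H H"
  shows "\<forall>g \<in> carrier (hnn_group H K phi). \<exists>i :: int. \<exists>a \<in> carrier H.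
           \<forall>b \<in> carrier H. \<forall>c \<in> carrier H.
             inv\<^bsub>hnn_group H K phi\<^esub> g \<otimes>\<^bsub>hnn_group H K phi\<^esub> hnn_emb H K phi b
               \<otimes>\<^bsub>hnn_group H K phi\<^esub> g = hnn_emb H K phi c
             \<longrightarrow> c = inv\<^bsub>H\<^esub> a \<otimes>\<^bsub>H\<^esub> aut_pow H phi i b \<otimes>\<^bsub>H\<^esub> a"
proof
  fix g assume g: "g \<in> carrier (hnn_group H K phi)"
  let ?G = "hnn_group H K phi"
  note grp = assms(1) and iso = assms(4)
  have KH: "K \<subseteq> carrier H" using assms(2) subgroup.subset by blast
  have G: "group ?G" by (rule hnn_group_group)
  obtain w where w: "w \<in> hnn_words H" "g = hnn_class H K phi w"
    using g by (auto simp: hnn_group_def)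
  have ig: "inv\<^bsub>?G\<^esub> g \<in> carrier ?G" using G g by (simp add: group.inv_closed)
  then obtain w' where w': "w' \<in> hnn_words H" "inv\<^bsub>?G\<^esub> g = hnn_class H K phi w'"
    by (auto simp: hnn_group_def)
  have eqw: "weval H phi u = weval H phi v" if "hnn_class H K phi u = hnn_class H K phi v"
    "u \<in> hnn_words H" for u v
  proof -
    have "u \<in> hnn_class H K phi v" using that in_class by metis
    then have "hnn_eq H K phi v u" by (simp add: hnn_class_def)
    then show ?thesis using hnn_eq_weval[OF grp iso _ KH] by metis
  qed
  obtain x n where xn: "weval H phi w = (x, n)" by fastforce
  obtain y m where ym: "weval H phi w' = (y, m)" by fastforce
  have x: "x \<in> carrier H" using weval_closed[OF grp iso w(1)] xn by simp
  have y: "y \<in> carrier H" using weval_closed[OF grp iso w'(1)] ym by simp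
  have "inv\<^bsub>?G\<^esub> g \<otimes>\<^bsub>?G\<^esub> g = \<one>\<^bsub>?G\<^esub>" using G g by (simp add: group.l_inv)
  then have "hnn_class H K phi (w' @ w) = hnn_class H K phi []"
    using w w' mult_class[OF w'(1) w(1), of K phi] by (simp add: one_G)
  then have "weval H phi (w' @ w) = weval H phi []" using eqw w w' by simp
  then have "pmul H phi (y, m) (x, n) = (\<one>\<^bsub>H\<^esub>, 0)"
    using weval_append[OF grp iso w'(1) w(1)] xn ym by simp
  then have yx: "y \<otimes>\<^bsub>H\<^esub> aut_pow H phi m x = \<one>\<^bsub>H\<^esub>" and mn: "m + n = 0"
    by (auto simp: pmul_def)
  let ?a = "aut_pow H phi m x"
  have a: "?a \<in> carrier H" using ap_closed[OF grp iso x] .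
  have yinv: "y = inv\<^bsub>H\<^esub> ?a" using group.inv_equality[OF grp yx a y] by simp
  show "\<exists>i :: int. \<exists>a \<in> carrier H.
           \<forall>b \<in> carrier H. \<forall>c \<in> carrier H.
             inv\<^bsub>?G\<^esub> g \<otimes>\<^bsub>?G\<^esub> hnn_emb H K phi b
               \<otimes>\<^bsub>?G\<^esub> g = hnn_emb H K phi c
             \<longrightarrow> c = inv\<^bsub>H\<^esub> a \<otimes>\<^bsub>H\<^esub> aut_pow H phi i b \<otimes>\<^bsub>H\<^esub> a"
  proof (intro exI bexI ballI impI)
    fix b c assume b: "b \<in> carrier H" and c: "c \<in> carrier H"
      and eq: "inv\<^bsub>?G\<^esub> g \<otimes>\<^bsub>?G\<^esub> hnn_emb H K phi b \<otimes>\<^bsub>?G\<^esub> g = hnn_emb H K phi c"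
    have bw: "[(Inl b, False)] \<in> hnn_words H" using b by simp
    have cw: "[(Inl c, False)] \<in> hnn_words H" using c by simp
    have "inv\<^bsub>?G\<^esub> g \<otimes>\<^bsub>?G\<^esub> hnn_emb H K phi b \<otimes>\<^bsub>?G\<^esub> g
        = hnn_class H K phi ((w' @ [(Inl b, False)]) @ w)"
      using w w' bw by (simp add: hnn_emb_def mult_class del: append_assoc)
    then have "hnn_class H K phi ((w' @ [(Inl b, False)]) @ w) = hnn_class H K phi [(Inl c, False)]"
      using eq by (simp add: hnn_emb_def)
    then have ev: "weval H phi ((w' @ [(Inl b, False)]) @ w) = weval H phi [(Inl c, False)]"
      using eqw w w' bw by simp
    have "pmul H phi (pmul H phi (y, m) (b, 0)) (x, n) = (c, 0)"
    proof -
      have e1: "weval H phi (w' @ [(Inl b, False)]) = pmul H phi (y, m) (b, 0)"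
        using weval_append[OF grp iso w'(1) bw] ym weval_single[OF grp iso b] by metis
      have "weval H phi ((w' @ [(Inl b, False)]) @ w) = pmul H phi (pmul H phi (y, m) (b, 0)) (x, n)"
        using weval_append[OF grp iso _ w(1), of "w' @ [(Inl b, False)]"] w'(1) bw e1 xn by simp
      then show ?thesis using ev weval_single[OF grp iso c] by metis
    qed
    then have "y \<otimes>\<^bsub>H\<^esub> aut_pow H phi m b \<otimes>\<^bsub>H\<^esub> ?a = c"
      by (simp add: pmul_def ap_0[OF grp iso])
    then show "c = inv\<^bsub>H\<^esub> ?a \<otimes>\<^bsub>H\<^esub> aut_pow H phi m b \<otimes>\<^bsub>H\<^esub> ?a"
      using yinv by simp
  qed (rule a)
qed


end
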